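(* Let $M\in\{-1,+1\}^{m\times N}$ and let $M'$ be obtained from $M$ by duplicating rows (each row of $M$ replaced by one or more identical copies), and partition the rows of $M'$ into duplicate classes, one class for each row of $M$. Suppose the initial distribution $D'_1$ for AdaBoost on $M'$ is constant on each duplicate class. Then: (1) the exhaustive AdaBoost orbit $(D'_t)$ on $M'$ remains constant on each duplicate class for all $t$; (2) the class-summed distributions $\bar D_t$ (summing $D'_t$ over each class) evolve exactly as exhaustive AdaBoost on $M$ started from $\bar D_1$; (3) $\gamma(M')=\gamma(M)$.
   Context: Exhaustive AdaBoost on $M\in\{-1,+1\}^{m\times N}$ with smallest-index tie-breaking: from $D_t\in\Delta^{m-1}$, set $\mu_t(j)=(D_t^\top M)_j$, $j_t=\min\operatorname{argmax}_j\mu_t(j)$, $r_t=\mu_t(j_t)$, and $D_{t+1}(i)=D_t(i)/(1+r_tM_{ij_t})$. The weak-learning margin is $\gamma(M)=\min_{D\in\Delta^{m-1}}\max_{1\le j\le N}(D^\top M)_j$. *)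

theory Defs
  imports Main "HOL-Library.FuncSet" Complex_Main
begin

text \<open>A matrix with m rows and N columns is a function nat => nat => real,
 only the entries with i < m, j < N matter. Distributions on the rows are
 functions nat => real, only the values at i < m matter.\<close>

definition pm1_matrix :: "nat \<Rightarrow> nat \<Rightarrow> (nat \<Rightarrow> nat \<Rightarrow> real) \<Rightarrow> bool" where
  "pm1_matrix m N M \<longleftrightarrow> (\<forall>i<m. \<forall>j<N. M i j = 1 \<or> M i j = -1)"

definition simplex :: "nat \<Rightarrow> (nat \<Rightarrow> real) set" where
  "simplex m = {D. (\<forall>i<m. 0 \<le> D i) \<and> (\<Sum>i<m. D i) = 1}"

definition edge :: "nat \<Rightarrow> (nat \<Rightarrow> nat \<Rightarrow> real) \<Rightarrow> (nat \<Rightarrow> real) \<Rightarrow> nat \<Rightarrow> real" where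
  "edge m M D j = (\<Sum>i<m. D i * M i j)"

definition best_col :: "nat \<Rightarrow> nat \<Rightarrow> (nat \<Rightarrow> nat \<Rightarrow> real) \<Rightarrow> (nat \<Rightarrow> real) \<Rightarrow> nat" where
  "best_col m N M D = (LEAST j. j < N \<and> (\<forall>k<N. edge m M D k \<le> edge m M D j))"

definition ada_step :: "nat \<Rightarrow> nat \<Rightarrow> (nat \<Rightarrow> nat \<Rightarrow> real) \<Rightarrow> (nat \<Rightarrow> real) \<Rightarrow> (nat \<Rightarrow> real)" where
  "ada_step m N M D = (let j = best_col m N M D; r = edge m M D j
                       in (\<lambda>i. D i / (1 + r * M i j)))"

text \<open>ada_orbit m N M D1 t is D_t, with ada_orbit ... 1 = D1 (index 0 also gives D1).\<close>
definition ada_orbit :: "nat \<Rightarrow> nat \<Rightarrow> (nat \<Rightarrow> nat \<Rightarrow> real) \<Rightarrow> (nat \<Rightarrow> real) \<Rightarrow> nat \<Rightarrow> (nat \<Rightarrow> real)" where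
  "ada_orbit m N M D1 t = ((ada_step m N M) ^^ (t - 1)) D1"

definition gamma :: "nat \<Rightarrow> nat \<Rightarrow> (nat \<Rightarrow> nat \<Rightarrow> real) \<Rightarrow> real" where
  "gamma m N M = (INF D \<in> simplex m. Max ((edge m M D) ` {..<N}))"

end

theory Submission
  imports Defs
begin

lemma grp:
  assumes "\<forall>i<m'. (c::nat\<Rightarrow>nat) i < m"
  shows "(\<Sum>i<m'. (f::nat\<Rightarrow>real) i) = (\<Sum>k<m. \<Sum>i\<in>{i. i<m' \<and> c i = k}. f i)"
proof -
  have "c ` {..<m'} \<subseteq> {..<m}" using assms by auto
  from sum.group[OF _ _ this, of f] show ?thesis by simp
qed

lemma edge_eq:
  assumes cm: "\<forall>i<m'. (c::nat\<Rightarrow>nat) i < m"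
    and dup: "\<forall>i<m'. \<forall>j<N. M' i j = M (c i) j" and j: "j < N"
  shows "edge m' M' D j = edge m M (\<lambda>k. \<Sum>i\<in>{i. i<m' \<and> c i = k}. D i) j"
proof -
  have "edge m' M' D j = (\<Sum>i<m'. D i * M' i j)" by (simp add: edge_def)
  also have "\<dots> = (\<Sum>k<m. \<Sum>i\<in>{i. i<m' \<and> c i = k}. D i * M' i j)" by (rule grp[OF cm])
  also have "\<dots> = (\<Sum>k<m. \<Sum>i\<in>{i. i<m' \<and> c i = k}. D i * M k j)"
    by (intro sum.cong refl) (use dup j in auto)
  also have "\<dots> = edge m M (\<lambda>k. \<Sum>i\<in>{i. i<m' \<and> c i = k}. D i) j"
    by (simp add: edge_def sum_distrib_right)
  finally show ?thesis .
qed

lemma best_col_lt: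
  assumes "0 < N" shows "best_col m N M D < N"
proof -
  obtain j where j: "j \<in> {..<N}" "edge m M D j = Max (edge m M D ` {..<N})"
    using Max_in[of "edge m M D ` {..<N}"] assms by fastforce
  have "\<forall>k<N. edge m M D k \<le> edge m M D j" using j by auto
  with j have "\<exists>j. j < N \<and> (\<forall>k<N. edge m M D k \<le> edge m M D j)" by auto
  from LeastI_ex[OF this] show ?thesis unfolding best_col_def by blast
qed

lemma best_col_eq:
  assumes cm: "\<forall>i<m'. (c::nat\<Rightarrow>nat) i < m"
    and dup: "\<forall>i<m'. \<forall>j<N. M' i j = M (c i) j"
  shows "best_col m' N M' D = best_col m N M (\<lambda>k. \<Sum>i\<in>{i. i<m' \<and> c i = k}. D i)"
proof -
  have "(\<lambda>j. j < N \<and> (\<forall>k<N. edge m' M' D k \<le> edge m' M' D j)) =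
        (\<lambda>j. j < N \<and> (\<forall>k<N. edge m M (\<lambda>k. \<Sum>i\<in>{i. i<m' \<and> c i = k}. D i) k
             \<le> edge m M (\<lambda>k. \<Sum>i\<in>{i. i<m' \<and> c i = k}. D i) j))"
    using edge_eq[OF cm dup] by (auto intro!: ext)
  then show ?thesis unfolding best_col_def by simp
qed

lemma step_sum:
  assumes cm: "\<forall>i<m'. (c::nat\<Rightarrow>nat) i < m"
    and dup: "\<forall>i<m'. \<forall>j<N. M' i j = M (c i) j" and N: "0 < N" and k: "k < m"
  shows "(\<Sum>i\<in>{i. i<m' \<and> c i = k}. ada_step m' N M' D i)
       = ada_step m N M (\<lambda>k. \<Sum>i\<in>{i. i<m' \<and> c i = k}. D i) k"
proof -
  define Db where "Db = (\<lambda>k. \<Sum>i\<in>{i. i<m' \<and> c i = k}. D i)"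
  define j where "j = best_col m' N M' D"
  have jN: "j < N" unfolding j_def by (rule best_col_lt[OF N])
  have bj: "best_col m N M Db = j" unfolding j_def Db_def using best_col_eq[OF cm dup] by simp
  have ej: "edge m' M' D j = edge m M Db j" unfolding Db_def using edge_eq[OF cm dup jN] .
  define r where "r = edge m M Db j"
  have "(\<Sum>i\<in>{i. i<m' \<and> c i = k}. ada_step m' N M' D i)
       = (\<Sum>i\<in>{i. i<m' \<and> c i = k}. D i / (1 + r * M' i j))"
    by (simp add: ada_step_def Let_def j_def[symmetric] ej r_def)
  also have "\<dots> = (\<Sum>i\<in>{i. i<m' \<and> c i = k}. D i / (1 + r * M k j))"
    by (intro sum.cong refl) (use dup jN in auto)
  also have "\<dots> = Db k / (1 + r * M k j)" by (simp add: Db_def sum_divide_distrib)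
  also have "\<dots> = ada_step m N M Db k" by (simp add: ada_step_def Let_def bj r_def)
  finally show ?thesis unfolding Db_def .
qed

lemma step_agree:
  assumes "\<forall>k<m. D k = E k" and k: "k < m"
  shows "ada_step m N M D k = ada_step m N M E k"
proof -
  have e: "edge m M D = edge m M E" unfolding edge_def using assms by (auto intro!: ext sum.cong)
  then have "best_col m N M D = best_col m N M E" unfolding best_col_def by simp
  with e show ?thesis using assms by (simp add: ada_step_def Let_def)
qed

lemma step_const:
  assumes dup: "\<forall>i<m'. \<forall>j<N. M' i j = M (c i) j" and N: "0 < N"
    and cst: "\<forall>i<m'. \<forall>i2<m'. c i = c i2 \<longrightarrow> D i = D i2"
  shows "\<forall>i<m'. \<forall>i2<m'. c i = c i2 \<longrightarrow> ada_step m' N M' D i = ada_step m' N M' D i2"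
proof (intro allI impI)
  fix i i2 assume h: "i < m'" "i2 < m'" "c i = c i2"
  define j where "j = best_col m' N M' D"
  have jN: "j < N" unfolding j_def by (rule best_col_lt[OF N])
  have e1: "M' i j = M' i2 j" using dup h jN by metis
  have e2: "D i = D i2" using cst h by blast
  show "ada_step m' N M' D i = ada_step m' N M' D i2"
    unfolding ada_step_def Let_def j_def[symmetric] e1 e2 ..
qed

theorem lemma7:
  fixes m N m' :: nat and M M' :: "nat \<Rightarrow> nat \<Rightarrow> real"
    and c :: "nat \<Rightarrow> nat" and D1' :: "nat \<Rightarrow> real"
  assumes "0 < m" and "0 < N"
    and "pm1_matrix m N M"
    and c_maps: "\<forall>i<m'. c i < m"
    and c_onto: "\<forall>k<m. \<exists>i<m'. c i = k"
    and dup: "\<forall>i<m'. \<forall>j<N. M' i j = M (c i) j"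
    and "D1' \<in> simplex m'"
    and const1: "\<forall>i<m'. \<forall>i2<m'. c i = c i2 \<longrightarrow> D1' i = D1' i2"
  shows "(\<forall>t\<ge>1. \<forall>i<m'. \<forall>i2<m'. c i = c i2 \<longrightarrow>
            ada_orbit m' N M' D1' t i = ada_orbit m' N M' D1' t i2)
       \<and> (\<forall>t\<ge>1. \<forall>k<m.
            (\<Sum>i\<in>{i. i < m' \<and> c i = k}. ada_orbit m' N M' D1' t i)
            = ada_orbit m N M (\<lambda>k. \<Sum>i\<in>{i. i < m' \<and> c i = k}. D1' i) t k)
       \<and> gamma m' N M' = gamma m N M"
proof (intro conjI)
  have P1: "\<forall>i<m'. \<forall>i2<m'. c i = c i2 \<longrightarrow> ((ada_step m' N M') ^^ n) D1' i = ((ada_step m' N M') ^^ n) D1' i2" for n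
  proof (induction n)
    case 0 from const1 show ?case by (simp only: funpow_0)
  next
    case (Suc n)
    from step_const[OF dup \<open>0 < N\<close> Suc.IH] show ?case by (simp only: funpow.simps comp_def)
  qed
  then show "\<forall>t\<ge>1. \<forall>i<m'. \<forall>i2<m'. c i = c i2 \<longrightarrow>
            ada_orbit m' N M' D1' t i = ada_orbit m' N M' D1' t i2"
    unfolding ada_orbit_def by blast
  have P2: "\<forall>k<m. (\<Sum>i\<in>{i. i < m' \<and> c i = k}. ((ada_step m' N M') ^^ n) D1' i)
        = ((ada_step m N M) ^^ n) (\<lambda>k. \<Sum>i\<in>{i. i < m' \<and> c i = k}. D1' i) k" for n
  proof (induction n)
    case 0 then show ?case by simp
  next
    case (Suc n)
    show ?case
    proof (intro allI impI)
      fix k assume k: "k < m"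
      have "(\<Sum>i\<in>{i. i < m' \<and> c i = k}. ((ada_step m' N M') ^^ Suc n) D1' i)
          = ada_step m N M (\<lambda>k. \<Sum>i\<in>{i. i<m' \<and> c i = k}. ((ada_step m' N M') ^^ n) D1' i) k"
        using step_sum[OF c_maps dup \<open>0 < N\<close> k] by simp
      also have "\<dots> = ada_step m N M (((ada_step m N M) ^^ n) (\<lambda>k. \<Sum>i\<in>{i. i < m' \<and> c i = k}. D1' i)) k"
        by (rule step_agree[OF Suc.IH k])
      finally show "(\<Sum>i\<in>{i. i < m' \<and> c i = k}. ((ada_step m' N M') ^^ Suc n) D1' i)
        = ((ada_step m N M) ^^ Suc n) (\<lambda>k. \<Sum>i\<in>{i. i < m' \<and> c i = k}. D1' i) k" by simp
    qed
  qed
  then show "\<forall>t\<ge>1. \<forall>k<m.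
            (\<Sum>i\<in>{i. i < m' \<and> c i = k}. ada_orbit m' N M' D1' t i)
            = ada_orbit m N M (\<lambda>k. \<Sum>i\<in>{i. i < m' \<and> c i = k}. D1' i) t k"
    unfolding ada_orbit_def by blast
  define cls where "cls = (\<lambda>k. {i. i < m' \<and> c i = k})"
  define bar where "bar = (\<lambda>D k. \<Sum>i\<in>cls k. (D::nat\<Rightarrow>real) i)"
  define F where "F = (\<lambda>D. Max ((edge m M D) ` {..<N}))"
  define F' where "F' = (\<lambda>D. Max ((edge m' M' D) ` {..<N}))"
  have FF: "F' D = F (bar D)" for D
  proof -
    have "edge m' M' D ` {..<N} = edge m M (bar D) ` {..<N}"
      using edge_eq[OF c_maps dup] unfolding bar_def cls_def by (auto intro!: image_cong)
    then show ?thesis unfolding F_def F'_def by simp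
  qed
  have "F' ` simplex m' = F ` simplex m"
  proof
    show "F' ` simplex m' \<subseteq> F ` simplex m"
    proof
      fix y assume "y \<in> F' ` simplex m'"
      then obtain D where D: "D \<in> simplex m'" "y = F' D" by auto
      have "bar D \<in> simplex m"
        using D(1) grp[OF c_maps, of D] unfolding simplex_def bar_def cls_def
        by (auto intro!: sum_nonneg)
      then show "y \<in> F ` simplex m" using D FF by auto
    qed
  next
    show "F ` simplex m \<subseteq> F' ` simplex m'"
    proof
      fix y assume "y \<in> F ` simplex m"
      then obtain D where D: "D \<in> simplex m" "y = F D" by auto
      define D' where "D' = (\<lambda>i. D (c i) / real (card (cls (c i))))"
      have cardpos: "card (cls k) > 0" if kk: "k < m" for k
      proof -
        obtain i where "i < m'" "c i = k" using c_onto kk by blast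
        then have "i \<in> cls k" unfolding cls_def by auto
        moreover have "finite (cls k)" unfolding cls_def by auto
        ultimately show ?thesis by (auto simp: card_gt_0_iff)
      qed
      have bb: "bar D' k = D k" if "k < m" for k
      proof -
        have "bar D' k = (\<Sum>i\<in>cls k. D k / real (card (cls k)))"
          unfolding bar_def D'_def cls_def by (intro sum.cong refl) auto
        also have "\<dots> = D k" using cardpos[OF that] by simp
        finally show ?thesis .
      qed
      have "D' \<in> simplex m'"
      proof -
        have "\<forall>i<m'. 0 \<le> D' i" using D(1) c_maps unfolding simplex_def D'_def by auto
        moreover have "(\<Sum>i<m'. D' i) = 1"
          using grp[OF c_maps, of D'] bb D(1) unfolding simplex_def bar_def cls_def by simp
        ultimately show ?thesis unfolding simplex_def by auto
      qed
      moreover have "F' D' = y"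
      proof -
        have "edge m M (bar D') = edge m M D" unfolding edge_def using bb by (auto intro!: ext sum.cong)
        then show ?thesis using FF D(2) unfolding F_def by simp
      qed
      ultimately show "y \<in> F' ` simplex m'" by auto
    qed
  qed
  then show "gamma m' N M' = gamma m N M" unfolding gamma_def F_def F'_def by simp
qed

end
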